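(* Let $K\ge 1$ and let $\mathcal A_\theta$ be an $L$-layer MinAgg GNN. If $h^{(L)}_{v_K}(H^{(0)}_K)\ne h^{(L)}_{u_K}(H^{(0)}_K)$, then $\mathcal A_\theta$ has at least $K$ edge-dependent message passing layers.
   Context: Attributed graphs: $G=(V,E,X_{\mathrm v},X_{\mathrm e})$ with $V$ finite, undirected edges, nonnegative edge weights and nonnegative node features; every node has a self-loop of weight $x_{(v,v)}=0$ and $\mathcal N(v)=\{v\}\cup\{u:\{u,v\}\in E\}$. A large constant $\beta>0$ encodes "infinite distance". The graph $H^{(0)}_K$: vertices $v_0,\dots,v_K,u_0,\dots,u_K$; edges $\{v_{i-1},v_i\}$, $\{u_{i-1},u_i\}$, $\{u_{i-1},v_i\}$, $\{v_{i-1},u_i\}$ for $i\in[K]$; weights $1$ on the edges $\{u_{i-1},v_i\}$ and $\{v_{i-1},u_i\}$ and $0$ on the edges $\{v_{i-1},v_i\}$, $\{u_{i-1},u_i\}$; node features $x_{v_0}=0$ and $x_w=\beta$ for all other $w$. An $m$-layer ReLU MLP computes $x^{(0)}=x$, $x^{(j)}=\sigma(W_jx^{(j-1)}+b_j)$ ($j\in[m]$), output $x^{(m)}$, $\sigma$ componentwise ReLU. MinAgg GNN: for each $\ell\in[L]$, ReLU MLPs $f^{\mathrm{agg},(\ell)}:\mathbb R^{d_{\ell-1}+1}\to\mathbb R^d$ and $f^{\mathrm{up},(\ell)}:\mathbb R^{d+d_{\ell-1}}\to\mathbb R^{d_\ell}$, $d_0=d_L=1$, $d_\ell=d$ otherwise;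 $h^{(0)}_v=x_v$ and $h^{(\ell)}_v=f^{\mathrm{up},(\ell)}\big(\min_{u\in\mathcal N(v)}f^{\mathrm{agg},(\ell)}(h^{(\ell-1)}_u\oplus x_{(u,v)})\oplus h^{(\ell-1)}_v\big)$ (coordinatewise min, $\oplus$ concatenation). The first $d_{\ell-1}$ input coordinates of $f^{\mathrm{agg},(\ell)}$ are its node component, the last its edge component. A function $f$ on $\mathbb R^n_{\ge0}$ depends on a set $S$ of coordinates if there are $x\ne y$ in $\mathbb R^n_{\ge 0}$ agreeing outside $S$ with $f(x)\neq f(y)$. Layer $\ell$ is message passing if $f^{\mathrm{agg},(\ell)}$ depends on its node component, and edge-dependent message passing if moreover $f^{\mathrm{agg},(\ell)}$ depends on its edge component. *)

theory Defs
  imports "HOL-Analysis.Analysis"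
begin

text \<open>An affine+ReLU layer is a pair (W, b): W a list of rows (output dim = length W),
  each row of length = input dim; b the bias vector.\<close>

definition relu_layer :: "real list list \<Rightarrow> real list \<Rightarrow> real list \<Rightarrow> real list" where
  "relu_layer W b x = map2 (\<lambda>row bi. max 0 (sum_list (map2 (*) row x) + bi)) W b"

type_synonym mlp = "(real list list \<times> real list) list"

definition mlp_apply :: "mlp \<Rightarrow> real list \<Rightarrow> real list" where
  "mlp_apply F x = foldl (\<lambda>y (W, b). relu_layer W b y) x F"

fun mlp_dims :: "nat \<Rightarrow> mlp \<Rightarrow> nat \<Rightarrow> bool" where
  "mlp_dims n [] m = (n = m)"
| "mlp_dims n ((W, b) # Ls) m =
     (length b = length W \<and> (\<forall>r\<in>set W. length r = n) \<and> mlp_dims (length W) Ls m)"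

definition is_mlp :: "nat \<Rightarrow> nat \<Rightarrow> mlp \<Rightarrow> bool" where
  "is_mlp n m F \<longleftrightarrow> F \<noteq> [] \<and> mlp_dims n F m"

definition depends_on :: "nat \<Rightarrow> (real list \<Rightarrow> real list) \<Rightarrow> nat set \<Rightarrow> bool" where
  "depends_on n f S \<longleftrightarrow>
     (\<exists>x y. length x = n \<and> length y = n \<and> (\<forall>i<n. 0 \<le> x ! i \<and> 0 \<le> y ! i) \<and> x \<noteq> y \<and>
            (\<forall>i<n. i \<notin> S \<longrightarrow> x ! i = y ! i) \<and> f x \<noteq> f y)"

text \<open>A GNN is given by hidden width d and a list of layers (f_agg, f_up); L = length.
  Dimensions: d_0 = d_L = 1, d_l = d otherwise.\<close>

type_synonym gnn = "(mlp \<times> mlp) list"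

definition gdim :: "nat \<Rightarrow> nat \<Rightarrow> nat \<Rightarrow> nat" where
  "gdim d L l = (if l = 0 \<or> l = L then 1 else d)"

definition is_minagg_gnn :: "nat \<Rightarrow> gnn \<Rightarrow> bool" where
  "is_minagg_gnn d A \<longleftrightarrow>
     (\<forall>l\<in>{1..length A}.
        is_mlp (gdim d (length A) (l - 1) + 1) d (fst (A ! (l - 1))) \<and>
        is_mlp (d + gdim d (length A) (l - 1)) (gdim d (length A) l) (snd (A ! (l - 1))))"

definition cw_min :: "nat \<Rightarrow> real list set \<Rightarrow> real list" where
  "cw_min d S = map (\<lambda>i. Min ((\<lambda>z. z ! i) ` S)) [0..<d]"

text \<open>Node embeddings h^(l)_v of a graph given by closed neighbourhoods N (including v),
  edge weights ew u v = x_(u,v) and node features x.\<close>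
fun gnn_h :: "nat \<Rightarrow> gnn \<Rightarrow> ('v \<Rightarrow> 'v set) \<Rightarrow> ('v \<Rightarrow> 'v \<Rightarrow> real) \<Rightarrow> ('v \<Rightarrow> real)
              \<Rightarrow> nat \<Rightarrow> 'v \<Rightarrow> real list" where
  "gnn_h d A N ew x 0 v = [x v]"
| "gnn_h d A N ew x (Suc l) v =
     mlp_apply (snd (A ! l))
       (cw_min d ((\<lambda>u. mlp_apply (fst (A ! l)) (gnn_h d A N ew x l u @ [ew u v])) ` N v)
        @ gnn_h d A N ew x l v)"

text \<open>Layer l (1-based) is message passing / edge-dependent message passing.
  The input of f_agg^(l) has dimension d_(l-1)+1; node component = first d_(l-1)
  coordinates, edge component = the last one.\<close>
definition message_passing_layer :: "nat \<Rightarrow> gnn \<Rightarrow> nat \<Rightarrow> bool" where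
  "message_passing_layer d A l \<longleftrightarrow>
     (let n = gdim d (length A) (l - 1)
      in depends_on (n + 1) (mlp_apply (fst (A ! (l - 1)))) {0..<n})"

definition edge_dep_layer :: "nat \<Rightarrow> gnn \<Rightarrow> nat \<Rightarrow> bool" where
  "edge_dep_layer d A l \<longleftrightarrow>
     message_passing_layer d A l \<and>
     (let n = gdim d (length A) (l - 1)
      in depends_on (n + 1) (mlp_apply (fst (A ! (l - 1)))) {n})"

text \<open>Vertex (i, False) is v_i, vertex (i, True) is u_i, for i \<le> K.\<close>

definition HK_nbrs :: "nat \<Rightarrow> nat \<times> bool \<Rightarrow> (nat \<times> bool) set" where
  "HK_nbrs K w = insert w {(j, c). j \<le> K \<and> (j + 1 = fst w \<or> fst w + 1 = j)}"

definition HK_weight :: "nat \<times> bool \<Rightarrow> nat \<times> bool \<Rightarrow> real" where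
  "HK_weight u w = (if snd u = snd w then 0 else 1)"

definition HK_feat :: "real \<Rightarrow> nat \<times> bool \<Rightarrow> real" where
  "HK_feat \<beta> w = (if w = (0, False) then 0 else \<beta>)"

end

theory Submission
  imports Defs
begin

lemma mlp_len: "mlp_dims n F m \<Longrightarrow> length x = n \<Longrightarrow> length (mlp_apply F x) = m"
proof (induction F arbitrary: n x)
  case Nil then show ?case by (simp add: mlp_apply_def)
next
  case (Cons L Ls)
  obtain W b where L: "L = (W, b)" by (cases L)
  have "mlp_apply (L # Ls) x = mlp_apply Ls (relu_layer W b x)"
    by (simp add: mlp_apply_def L)
  moreover have "length (relu_layer W b x) = length W"
    using Cons.prems L by (simp add: relu_layer_def)
  ultimately show ?case using Cons L by (metis mlp_dims.simps(2))
qed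

lemma mlp_nonneg: "F \<noteq> [] \<Longrightarrow> z \<in> set (mlp_apply F x) \<Longrightarrow> 0 \<le> z"
proof (induction F rule: rev_induct)
  case Nil then show ?case by simp
next
  case (snoc L Ls)
  obtain W b where L: "L = (W, b)" by (cases L)
  have "mlp_apply (Ls @ [L]) x = relu_layer W b (mlp_apply Ls x)"
    by (simp add: mlp_apply_def L)
  with snoc.prems show ?case
    by (auto simp: relu_layer_def set_zip)
qed

lemma inv:
  assumes "is_minagg_gnn d A" "\<beta> > 0"
  shows "l \<le> length A \<Longrightarrow>
    length (gnn_h d A (HK_nbrs K) HK_weight (HK_feat \<beta>) l v) = gdim d (length A) l \<and>
    (\<forall>z\<in>set (gnn_h d A (HK_nbrs K) HK_weight (HK_feat \<beta>) l v). 0 \<le> z)"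
proof (induction l arbitrary: v)
  case 0 then show ?case using assms(2) by (simp add: gdim_def HK_feat_def)
next
  case (Suc l)
  have "Suc l \<in> {1..length A}" using Suc.prems by simp
  with assms(1) have m1: "is_mlp (d + gdim d (length A) l) (gdim d (length A) (Suc l)) (snd (A ! l))"
    unfolding is_minagg_gnn_def by fastforce
  have IH: "length (gnn_h d A (HK_nbrs K) HK_weight (HK_feat \<beta>) l v) = gdim d (length A) l"
    using Suc by simp
  show ?case using m1 IH
    by (auto simp: is_mlp_def cw_min_def intro!: mlp_len dest: mlp_nonneg)
qed

lemma img_eq: "\<phi> ` X = Y \<Longrightarrow> (\<And>u. u \<in> X \<Longrightarrow> f u = g (\<phi> u)) \<Longrightarrow> f ` X = g ` Y"
  by (metis (no_types, lifting) image_cong image_image)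

lemma nodep: "\<not> depends_on n f S \<Longrightarrow> length x = n \<Longrightarrow> length y = n \<Longrightarrow>
   (\<forall>i<n. 0 \<le> x ! i \<and> 0 \<le> y ! i) \<Longrightarrow> (\<forall>i<n. i \<notin> S \<longrightarrow> x ! i = y ! i) \<Longrightarrow> f x = f y"
  unfolding depends_on_def by (cases "x = y") auto

lemma nn_app: "(\<forall>a\<in>set z. 0 \<le> (a::real)) \<Longrightarrow> 0 \<le> e \<Longrightarrow> i < length z + 1 \<Longrightarrow> 0 \<le> (z @ [e]) ! i"
  by (cases "i < length z") (auto simp: nth_append)

definition flp :: "nat \<times> bool \<Rightarrow> nat \<times> bool" where "flp u = (fst u, \<not> snd u)"

lemma flp_nbrs: "flp ` HK_nbrs K (i, False) = HK_nbrs K (i, True)"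
  unfolding HK_nbrs_def flp_def
  by (auto simp: image_iff)

lemma swp_nbrs: "(\<lambda>u. if u = (i, False) then (i, True) else u) ` HK_nbrs K (i, False) = HK_nbrs K (i, True)"
  unfolding HK_nbrs_def by (auto simp: image_iff)

lemma w_flp: "HK_weight (flp u) (flp w) = HK_weight u w"
  by (auto simp: HK_weight_def flp_def)

lemma w_nn: "0 \<le> HK_weight u w" by (simp add: HK_weight_def)

lemma card_step: "card {k \<in> {1..Suc l}. P k} = card {k \<in> {1..l}. P k} + (if P (Suc l) then 1 else 0)"
proof -
  have "{k \<in> {1..Suc l}. P k} = {k \<in> {1..l}. P k} \<union> (if P (Suc l) then {Suc l} else {})"
    by (auto simp: le_Suc_eq)
  then show ?thesis by auto
qed


lemma claim:
  assumes A: "is_minagg_gnn d A" and b: "\<beta> > 0"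
  shows "l \<le> length A \<Longrightarrow> card {k \<in> {1..l}. edge_dep_layer d A k} < i \<Longrightarrow>
    gnn_h d A (HK_nbrs K) HK_weight (HK_feat \<beta>) l (i, False) =
    gnn_h d A (HK_nbrs K) HK_weight (HK_feat \<beta>) l (i, True)"
proof (induction l arbitrary: i)
  case 0 then show ?case by (simp add: HK_feat_def)
next
  case (Suc l)
  define H where "H = gnn_h d A (HK_nbrs K) HK_weight (HK_feat \<beta>) l"
  define agg where "agg = mlp_apply (fst (A ! l))"
  define n where "n = gdim d (length A) l"
  let ?c = "card {k \<in> {1..l}. edge_dep_layer d A k}"
  have cs: "card {k \<in> {1..Suc l}. edge_dep_layer d A k} = ?c + (if edge_dep_layer d A (Suc l) then 1 else 0)"
    by (rule card_step)
  have IH: "\<And>j. ?c < j \<Longrightarrow> H (j, False) = H (j, True)"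
    using Suc.IH Suc.prems(1) unfolding H_def by simp
  have iv: "\<And>v. length (H v) = n \<and> (\<forall>z\<in>set (H v). 0 \<le> z)"
    unfolding H_def n_def using inv[OF A b] Suc.prems(1) by (meson Suc_leD)
  have Hi: "H (i, False) = H (i, True)" using IH Suc.prems(2) cs by simp
  have sets: "(\<lambda>u. agg (H u @ [HK_weight u (i, False)])) ` HK_nbrs K (i, False) =
              (\<lambda>u. agg (H u @ [HK_weight u (i, True)])) ` HK_nbrs K (i, True)"
  proof (cases "edge_dep_layer d A (Suc l)")
    case True
    then have ic: "?c + 1 < i" using Suc.prems(2) cs by simp
    show ?thesis
    proof (rule img_eq[OF flp_nbrs])
      fix u assume u: "u \<in> HK_nbrs K (i, False)"
      then have "i \<le> fst u + 1" unfolding HK_nbrs_def by auto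
      then have "H u = H (flp u)" using IH[of "fst u"] ic
        by (cases u) (auto simp: flp_def, metis (full_types))
      moreover have "HK_weight (flp u) (i, True) = HK_weight u (i, False)"
        using w_flp[of u "(i, False)"] by (simp add: flp_def)
      ultimately show "agg (H u @ [HK_weight u (i, False)]) = agg (H (flp u) @ [HK_weight (flp u) (i, True)])"
        by simp
    qed
  next
    case False
    then have "\<not> depends_on (n + 1) agg {0..<n} \<or> \<not> depends_on (n + 1) agg {n}"
      unfolding edge_dep_layer_def message_passing_layer_def agg_def n_def Let_def by simp
    then show ?thesis
    proof
      assume nd: "\<not> depends_on (n + 1) agg {0..<n}"
      show ?thesis
      proof (rule img_eq[OF flp_nbrs])
        fix u assume u: "u \<in> HK_nbrs K (i, False)"
        have "HK_weight (flp u) (i, True) = HK_weight u (i, False)"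
          using w_flp[of u "(i, False)"] by (simp add: flp_def)
        moreover have "agg (H u @ [HK_weight u (i, False)]) = agg (H (flp u) @ [HK_weight u (i, False)])"
          apply (rule nodep[OF nd])
          using iv[of u] iv[of "flp u"] w_nn[of u "(i, False)"]
          by (auto simp: nth_append intro!: nn_app)
        ultimately show "agg (H u @ [HK_weight u (i, False)]) = agg (H (flp u) @ [HK_weight (flp u) (i, True)])"
          by simp
      qed
    next
      assume nd: "\<not> depends_on (n + 1) agg {n}"
      have e0: "\<And>v e. 0 \<le> e \<Longrightarrow> agg (H v @ [e]) = agg (H v @ [0])"
        apply (rule nodep[OF nd])
        using iv by (auto simp: nth_append intro!: nn_app) (metis nth_mem)
      show ?thesis
      proof (rule img_eq[OF swp_nbrs])
        fix u assume u: "u \<in> HK_nbrs K (i, False)"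
        show "agg (H u @ [HK_weight u (i, False)]) =
          agg (H (if u = (i, False) then (i, True) else u) @ [HK_weight (if u = (i, False) then (i, True) else u) (i, True)])"
        proof (cases "u = (i, False)")
          case True then show ?thesis using Hi by (simp add: HK_weight_def)
        next
          case False
          then show ?thesis using e0[of "HK_weight u (i, False)" u] e0[of "HK_weight u (i, True)" u] w_nn
            by simp
        qed
      qed
    qed
  qed
  show ?case
    using sets Hi unfolding H_def agg_def by simp
qed

theorem mainTheorem7:
  fixes K d :: nat and A :: gnn and \<beta> :: real
  assumes "K \<ge> 1" and "\<beta> > 0"
    and "is_minagg_gnn d A"
    and "gnn_h d A (HK_nbrs K) HK_weight (HK_feat \<beta>) (length A) (K, False)
         \<noteq> gnn_h d A (HK_nbrs K) HK_weight (HK_feat \<beta>) (length A) (K, True)"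
  shows "card {l \<in> {1..length A}. edge_dep_layer d A l} \<ge> K"
  using claim[OF assms(3) assms(2), of "length A" K K] assms(4) by force

end
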